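(* Let $\psi_{pl}:\mathbb{R}_{\geq 0}\to\mathbb{R}$ be a non-decreasing concave piecewise linear function with 2 or more (linear) pieces. Then $\psi_{pl}$ is not a neighbor function.
   Context: A neighbor function is a function $\psi:\mathbb{R}_{\geq 0}\to\mathbb{R}$ that is (i) strictly increasing, (ii) continuous, (iii) concave, and (iv) such that $g(x)=\psi(e^{x})$ is convex as a function of $x\in\mathbb{R}$. *)

theory Defs
  imports "HOL-Analysis.Analysis"
begin

text \<open>Neighbor function: psi defined on the nonnegative reals (we use a total function
  real => real and only constrain it on {0..}).\<close>
definition neighbor_function :: "(real \<Rightarrow> real) \<Rightarrow> bool" where
  "neighbor_function \<psi> \<longleftrightarrow>
     strict_mono_on {0..} \<psi> \<and>
     continuous_on {0..} \<psi> \<and>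
     concave_on {0..} \<psi> \<and>
     convex_on UNIV (\<lambda>x. \<psi> (exp x))"

text \<open>psi is piecewise linear on [0,oo) with exactly n linear pieces:
  breakpoints 0 = t 0 < t 1 < ... < t (n-1), psi x = a i * x + b i on
  [t i, t (i+1)] (the last piece on [t (n-1), oo)), and consecutive
  pieces have different slopes (so they are genuinely distinct pieces).\<close>
definition piecewise_linear_pieces :: "(real \<Rightarrow> real) \<Rightarrow> nat \<Rightarrow> bool" where
  "piecewise_linear_pieces \<psi> n \<longleftrightarrow>
     (\<exists>t a b :: nat \<Rightarrow> real.
        t 0 = 0 \<and>
        (\<forall>i. Suc i < n \<longrightarrow> t i < t (Suc i)) \<and>
        (\<forall>i<n. \<forall>x. t i \<le> x \<and> (Suc i < n \<longrightarrow> x \<le> t (Suc i)) \<longrightarrow> \<psi> x = a i * x + b i) \<and>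
        (\<forall>i. Suc i < n \<longrightarrow> a i \<noteq> a (Suc i)))"

end

theory Submission
  imports Defs
begin

theorem theoremF1:
  fixes \<psi> :: "real \<Rightarrow> real" and n :: nat
  assumes "mono_on {0..} \<psi>"
    and "concave_on {0..} \<psi>"
    and "piecewise_linear_pieces \<psi> n"
    and "n \<ge> 2"
  shows "\<not> neighbor_function \<psi>"
proof
  assume nb: "neighbor_function \<psi>"
  hence cv: "convex_on UNIV (\<lambda>x. \<psi> (exp x))" by (simp add: neighbor_function_def)
  obtain t a b :: "nat \<Rightarrow> real" where t0: "t 0 = 0"
    and tinc: "\<forall>i. Suc i < n \<longrightarrow> t i < t (Suc i)"
    and lin: "\<forall>i<n. \<forall>x. t i \<le> x \<and> (Suc i < n \<longrightarrow> x \<le> t (Suc i)) \<longrightarrow> \<psi> x = a i * x + b i"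
    and ne: "\<forall>i. Suc i < n \<longrightarrow> a i \<noteq> a (Suc i)"
    using assms(3) unfolding piecewise_linear_pieces_def by blast
  define s where "s = t 1"
  have s0: "s > 0" using tinc[rule_format, of 0] assms(4) t0 by (auto simp: s_def)
  define T where "T = (if n > 2 then t 2 else 2 * s)"
  have sT: "s < T" using tinc s0 by (auto simp: T_def s_def numeral_2_eq_2)
  have L0: "\<psi> x = a 0 * x + b 0" if "0 \<le> x" "x \<le> s" for x
    using lin assms(4) that t0 by (auto simp: s_def)
  have L1: "\<psi> x = a 1 * x + b 1" if "s \<le> x" "x \<le> T" for x
    using lin[rule_format, of 1 x] assms(4) that by (auto simp: s_def T_def numeral_2_eq_2 split: if_splits)
  have ne01: "a 0 \<noteq> a 1" using ne assms(4) by auto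
  have ps: "\<psi> s = a 0 * s + b 0" "\<psi> s = a 1 * s + b 1" using L0[of s] L1[of s] s0 sT by auto
  define h where "h = min s (T - s)"
  have h0: "h > 0" using s0 sT by (simp add: h_def)
  have c1: "\<psi> ((1 - 1/2) *\<^sub>R (s - h) + (1/2) *\<^sub>R (s + h)) \<ge> (1 - 1/2) * \<psi> (s - h) + (1/2) * \<psi> (s + h)"
    by (rule concave_onD[OF assms(2)]) (use s0 sT in \<open>auto simp: h_def\<close>)
  have c2: "(1 - 1/2) *\<^sub>R (s - h) + (1/2) *\<^sub>R (s + h) = s" by (simp add: field_simps)
  have c3: "\<psi> (s - h) = a 0 * (s - h) + b 0" by (rule L0) (use s0 sT h0 in \<open>auto simp: h_def\<close>)
  have c4: "\<psi> (s + h) = a 1 * (s + h) + b 1" by (rule L1) (use s0 sT h0 in \<open>auto simp: h_def\<close>)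
  have "\<psi> s \<ge> (1/2) * (a 0 * (s - h) + b 0) + (1/2) * (a 1 * (s + h) + b 1)"
    using c1 unfolding c2 c3 c4 by simp
  hence "a 1 * h \<le> a 0 * h" using ps by (simp add: algebra_simps)
  hence "a 1 \<le> a 0" using h0 by simp
  hence lt: "a 1 < a 0" using ne01 by simp
  define e where "e = min 1 (min ((T - s) / s) ((a 0 - a 1) / (\<bar>a 1\<bar> + 1))) / 2"
  have e0: "e > 0" using lt sT s0 by (simp add: e_def)
  have X: "(T - s) / s > 0" "(a 0 - a 1) / (\<bar>a 1\<bar> + 1) > 0" using lt sT s0 by auto
  have e1: "e \<le> (T - s) / s" "e < (a 0 - a 1) / (\<bar>a 1\<bar> + 1)"
  proof -
    have gen: "\<And>X Y::real. X > 0 \<Longrightarrow> Y > 0 \<Longrightarrow> min 1 (min X Y) / 2 \<le> X \<and> min 1 (min X Y) / 2 < Y"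
      by (auto simp: min_def)
    show "e \<le> (T - s) / s" "e < (a 0 - a 1) / (\<bar>a 1\<bar> + 1)"
      unfolding e_def using gen[OF X] by blast+
  qed
  have esT: "s * (1 + e) \<le> T" using e1(1) s0 by (simp add: field_simps)
  have "e * (\<bar>a 1\<bar> + 1) < a 0 - a 1" using e1(2) by (simp add: field_simps)
  hence "e * \<bar>a 1\<bar> < a 0 - a 1" using e0 by (simp add: algebra_simps)
  moreover have "a 1 * e \<le> e * \<bar>a 1\<bar>" using e0
    by (metis abs_ge_self abs_mult abs_of_pos mult.commute)
  ultimately have key: "a 1 * (1 + e) < a 0" by (simp add: algebra_simps)
  define u where "u = 1 + e"
  have u1: "u > 1" using e0 by (simp add: u_def)
  define d where "d = ln u"
  have d0: "d > 0" using u1 by (simp add: d_def)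
  have em: "exp (ln s - d) = s / u" using s0 u1 by (simp add: d_def exp_diff)
  have ep: "exp (ln s + d) = s * u" using s0 u1 by (simp add: d_def exp_add)
  have k1: "\<psi> (exp ((1 - 1/2) *\<^sub>R (ln s - d) + (1/2) *\<^sub>R (ln s + d)))
        \<le> (1 - 1/2) * \<psi> (exp (ln s - d)) + (1/2) * \<psi> (exp (ln s + d))"
    by (rule convex_onD[OF cv]) auto
  have k2: "(1 - 1/2) *\<^sub>R (ln s - d) + (1/2) *\<^sub>R (ln s + d) = ln s" by (simp add: field_simps)
  have k3: "\<psi> (s / u) = a 0 * (s / u) + b 0"
    by (rule L0) (use s0 u1 in \<open>auto simp: field_simps\<close>)
  have k4: "\<psi> (s * u) = a 1 * (s * u) + b 1"
    by (rule L1) (use s0 u1 esT in \<open>auto simp: u_def\<close>)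
  have k5: "exp (ln s) = s" using s0 by simp
  have "\<psi> s \<le> (1/2) * (a 0 * (s / u) + b 0) + (1/2) * (a 1 * (s * u) + b 1)"
    using k1 unfolding k2 k5 em ep k3 k4 by simp
  moreover have gen2: "\<And>Z X Y::real. Z \<le> (1/2) * X + (1/2) * Y \<Longrightarrow> 2 * Z \<le> X + Y" by linarith
  ultimately have "2 * \<psi> s \<le> (a 0 * (s / u) + b 0) + (a 1 * (s * u) + b 1)" by blast
  hence "2 * \<psi> s \<le> a 0 * (s / u) + b 0 + a 1 * (s * u) + b 1" by (simp add: add.assoc)
  hence "0 \<le> a 0 * (s / u - s) + a 1 * (s * u - s)" using ps by (simp add: algebra_simps)
  hence "0 \<le> a 0 * (s - s * u) + a 1 * u * (s * u - s)" using u1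
    by (simp add: field_simps) 
  hence "0 \<le> (a 1 * u - a 0) * (s * (u - 1))" by (simp add: algebra_simps)
  moreover have "s * (u - 1) > 0" using s0 u1 by simp
  ultimately have "a 1 * u - a 0 \<ge> 0" by (simp add: zero_le_mult_iff)
  thus False using key by (simp add: u_def)
qed

end
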